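(* Let $\dot\Theta_\theta$ be a subset of a Hilbert space with inner product $\langle\cdot,\cdot\rangle_\theta$, let $H$ be a Hilbert space, let $A_\theta:\operatorname{lin}\dot\Theta_\theta\to H$ be a continuous linear operator and suppose its adjoint $A_\theta^\star:H\to\overline{\operatorname{lin}}\,\dot\Theta_\theta$ is injective. Let $\mathcal G$ be a dense subspace of $H$. Then $\tilde\chi_\theta\in\overline{\operatorname{lin}}\,\dot\Theta_\theta$ lies in $\operatorname{ran}A_\theta^\star$ if and only if (i) there is a sequence $\chi_n\in A_\theta^\star(\mathcal G)$ with $\chi_n\to\tilde\chi_\theta$ as $n\to\infty$, and (ii) $(A_\theta^\star)^{-1}\chi_n$ converges in $H$ to some $\psi\in H$. In this case $A_\theta^\star\psi=\tilde\chi_\theta$, and $\Pi_{\overline{\operatorname{ran}}A_\theta}\psi=\psi=(A_\theta^\star)^\dagger\tilde\chi_\theta$, i.e. $\psi$ is the efficient influence function.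
   Context: $\Pi_{\overline{\operatorname{ran}}A_\theta}$ denotes the orthogonal projection onto the closure of the range of $A_\theta$. $(A_\theta^\star)^\dagger$ is the Moore–Penrose pseudoinverse: for $\zeta\in\operatorname{ran}A_\theta^\star$, $(A_\theta^\star)^\dagger\zeta$ is the unique element of $(\ker A_\theta^\star)^\perp$ mapped to $\zeta$. In the semiparametric setting where $A_\theta$ is the generalized score operator of a model at $\theta$ and $\tilde\chi_\theta$ is the gradient of a pathwise differentiable parameter, the efficient influence function is $(A_\theta^\star)^\dagger\tilde\chi_\theta$. *)

theory Defs
  imports "HOL-Analysis.Analysis"
begin

definition bounded_linear_on :: "'a::real_normed_vector set \<Rightarrow> ('a \<Rightarrow> 'b::real_normed_vector) \<Rightarrow> bool" where
  "bounded_linear_on S A \<longleftrightarrow> subspace S \<and>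
     (\<forall>x\<in>S. \<forall>y\<in>S. A (x + y) = A x + A y) \<and>
     (\<forall>c. \<forall>x\<in>S. A (c *\<^sub>R x) = c *\<^sub>R A x) \<and>
     (\<exists>K. \<forall>x\<in>S. norm (A x) \<le> K * norm x)"

definition hadjoint :: "'a::real_inner set \<Rightarrow> ('a \<Rightarrow> 'b::real_inner) \<Rightarrow> 'b \<Rightarrow> 'a" where
  "hadjoint S A h = (THE y. y \<in> closure S \<and> (\<forall>g\<in>S. inner y g = inner h (A g)))"

definition orth_proj :: "'a::real_inner set \<Rightarrow> 'a \<Rightarrow> 'a" where
  "orth_proj M x = (THE y. y \<in> M \<and> (\<forall>m\<in>M. inner (x - y) m = 0))"

text \<open>Moore-Penrose pseudoinverse applied to an element of the range:
  the unique element of (ker T)^perp mapped to z.\<close>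
definition mp_pinv :: "('b::real_inner \<Rightarrow> 'a::real_inner) \<Rightarrow> 'a \<Rightarrow> 'b" where
  "mp_pinv T z = (THE x. x \<in> orthogonal_comp (T -` {0}) \<and> T x = z)"

end

theory Submission
  imports Defs
begin


lemma parallelogram:
  fixes a b :: "'a::real_inner"
  shows "norm (a - b)^2 + norm (a + b)^2 = 2*norm a^2 + 2*norm b^2"
  by (simp add: power2_norm_eq_inner inner_add inner_diff inner_commute algebra_simps)

lemma subspace_closure_sub:
  fixes S :: "'a::real_normed_vector set"
  assumes "subspace S" shows "subspace (closure S)"
  unfolding subspace_def
proof (intro conjI ballI allI)
  show "0 \<in> closure S" using assms closure_subset subspace_0 by blast
next
  fix x y assume "x \<in> closure S" "y \<in> closure S"
  then obtain u v where u: "\<forall>n. u n \<in> S" "u \<longlonglongrightarrow> x" and v: "\<forall>n. v n \<in> S" "v \<longlonglongrightarrow> y"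
    by (meson closure_sequential)
  have "\<forall>n. u n + v n \<in> S" using u v assms by (simp add: subspace_add)
  moreover have "(\<lambda>n. u n + v n) \<longlonglongrightarrow> x + y" using u v by (intro tendsto_add)
  ultimately show "x + y \<in> closure S" by (meson closure_sequential)
next
  fix c x assume "x \<in> closure S"
  then obtain u where u: "\<forall>n. u n \<in> S" "u \<longlonglongrightarrow> x"
    by (meson closure_sequential)
  have "\<forall>n. c *\<^sub>R u n \<in> S" using u assms by (simp add: subspace_scale)
  moreover have "(\<lambda>n. c *\<^sub>R u n) \<longlonglongrightarrow> c *\<^sub>R x" using u by (intro tendsto_scaleR tendsto_const)
  ultimately show "c *\<^sub>R x \<in> closure S" by (meson closure_sequential)
qed

lemma orth_min:
  fixes v m :: "'a::real_inner"
  assumes "\<And>t::real. norm v^2 \<le> norm (v - t *\<^sub>R m)^2"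
  shows "inner v m = 0"
proof -
  define a where "a = inner v m"
  define b where "b = inner m m"
  have b0: "b \<ge> 0" unfolding b_def by simp
  have e: "norm (v - t *\<^sub>R m)^2 = norm v^2 - 2*t*a + t^2*b" for t
    unfolding power2_norm_eq_inner a_def b_def
    by (simp add: inner_diff inner_commute algebra_simps power2_eq_square)
  define t where "t = a/(b+1)"
  have "0 \<le> - 2*t*a + t^2*b" using assms[of t] e[of t] by simp
  hence "0 \<le> (b+1)^2 * (- 2*t*a + t^2*b)" by simp
  also have "(b+1)^2 * (- 2*t*a + t^2*b) = -2*a*(t*(b+1))*(b+1) + (t*(b+1))^2*b"
    by (simp add: algebra_simps power2_eq_square)
  also have "t*(b+1) = a" unfolding t_def using b0 by simp
  also have "-2*a*a*(b+1) + a^2*b = - (a^2*(b+2))" by (simp add: algebra_simps power2_eq_square)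
  finally have "a^2*(b+2) \<le> 0" by simp
  moreover have "a^2*(b+2) \<ge> 0" using b0 by simp
  ultimately have "a^2 * (b+2) = 0" by linarith
  then show ?thesis using b0 unfolding a_def by simp
qed



lemma proj_exists:
  fixes N :: "'a::{real_inner,complete_space} set"
  assumes sN: "subspace N" and cN: "closed N"
  shows "\<exists>p\<in>N. \<forall>m\<in>N. inner (x - p) m = 0"
proof -
  define F where "F = (\<lambda>n. (norm (x - n))^2) ` N"
  define D where "D = Inf F"
  have Fne: "F \<noteq> {}" using sN subspace_0 unfolding F_def by blast
  have Fbd: "bdd_below F" unfolding F_def by (intro bdd_belowI[of _ 0]) auto
  have Dle: "D \<le> (norm (x - n))^2" if "n \<in> N" for n
    unfolding D_def F_def using that Fbd F_def by (intro cInf_lower) auto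
  have "\<forall>k. \<exists>n\<in>N. (norm (x - n))^2 < D + inverse (real (Suc k))"
  proof
    fix k
    have "Inf F < D + inverse (real (Suc k))" unfolding D_def by simp
    then obtain f where "f \<in> F" "f < D + inverse (real (Suc k))"
      using cInf_less_iff[OF Fne Fbd] by blast
    then show "\<exists>n\<in>N. (norm (x - n))^2 < D + inverse (real (Suc k))" unfolding F_def by auto
  qed
  then obtain s where sN': "\<And>k. s k \<in> N" and sD: "\<And>k. (norm (x - s k))^2 < D + inverse (real (Suc k))"
    by metis
  have bound: "(norm (s i - s j))^2 \<le> 2 * inverse (real (Suc i)) + 2 * inverse (real (Suc j))" for i j
  proof -
    define mid where "mid = (1/2) *\<^sub>R (s i + s j)"
    have "mid \<in> N" unfolding mid_def using sN sN' by (simp add: subspace_add subspace_scale)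
    hence "D \<le> (norm (x - mid))^2" by (rule Dle)
    have eq: "(x - s i) + (x - s j) = 2 *\<^sub>R (x - mid)" unfolding mid_def by (simp add: algebra_simps scaleR_2)
    have "(norm ((x - s i) - (x - s j)))^2 + (norm ((x - s i) + (x - s j)))^2
          = 2*(norm (x - s i))^2 + 2*(norm (x - s j))^2" by (rule parallelogram)
    moreover have "(norm ((x - s i) + (x - s j)))^2 = 4 * (norm (x - mid))^2"
      unfolding eq by (simp add: power2_eq_square)
    moreover have "(x - s i) - (x - s j) = s j - s i" by simp
    moreover have "norm (s j - s i) = norm (s i - s j)" by (rule norm_minus_commute)
    ultimately have "(norm (s i - s j))^2 = 2*(norm (x - s i))^2 + 2*(norm (x - s j))^2 - 4 * (norm (x - mid))^2"
      by simp
    then show ?thesis using sD[of i] sD[of j] \<open>D \<le> (norm (x - mid))^2\<close> by linarith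
  qed
  have "Cauchy s"
  proof (rule CauchyI)
    fix e :: real assume e: "0 < e"
    obtain M :: nat where M: "4 / e^2 < real M" using reals_Archimedean2 by blast
    have Mpos: "0 < real (Suc M)" by simp
    have "4 / e^2 < real (Suc M)" using M by simp
    hence M4: "4 * inverse (real (Suc M)) < e^2" using e Mpos
      by (simp add: field_simps)
    show "\<exists>M. \<forall>m\<ge>M. \<forall>n\<ge>M. norm (s m - s n) < e"
    proof (intro exI allI impI)
      fix m n assume mM: "m \<ge> M" and nM: "n \<ge> M"
      have im: "inverse (real (Suc m)) \<le> inverse (real (Suc M))" using mM
        by (intro le_imp_inverse_le) auto
      have inn: "inverse (real (Suc n)) \<le> inverse (real (Suc M))" using nM
        by (intro le_imp_inverse_le) auto
      have "(norm (s m - s n))^2 < e^2" using bound[of m n] im inn M4 by linarith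
      then show "norm (s m - s n) < e" using e by (meson abs_le_square_iff abs_of_nonneg less_le_not_le norm_ge_zero not_le order_less_imp_le power2_less_imp_less)
    qed
  qed
  then obtain p where sp: "s \<longlonglongrightarrow> p" using Cauchy_convergent_iff convergent_def by blast
  have pN: "p \<in> N" using cN sp sN' closed_sequential_limits by blast
  have "(\<lambda>k. (norm (x - s k))^2) \<longlonglongrightarrow> (norm (x - p))^2"
    by (intro tendsto_intros sp)
  moreover have "(\<lambda>k. D + inverse (real (Suc k))) \<longlonglongrightarrow> D" by (rule LIMSEQ_inverse_real_of_nat_add)
  ultimately have pD: "(norm (x - p))^2 \<le> D"
    by (rule LIMSEQ_le) (use sD less_imp_le in auto)
  show ?thesis
  proof (intro bexI[OF _ pN] ballI)
    fix m assume mN: "m \<in> N"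
    show "inner (x - p) m = 0"
    proof (rule orth_min)
      fix t :: real
      have "p + t *\<^sub>R m \<in> N" using sN pN mN by (simp add: subspace_add subspace_scale)
      hence "D \<le> (norm (x - (p + t *\<^sub>R m)))^2" by (rule Dle)
      moreover have "x - (p + t *\<^sub>R m) = x - p - t *\<^sub>R m" by simp
      ultimately show "(norm (x - p))^2 \<le> (norm (x - p - t *\<^sub>R m))^2" using pD by (metis order.trans)
    qed
  qed
qed



lemma orth_closure_zero:
  fixes d :: "'a::real_inner"
  assumes "d \<in> closure S" "\<And>g. g \<in> S \<Longrightarrow> inner d g = 0"
  shows "d = 0"
proof -
  obtain u where u: "\<forall>n. u n \<in> S" "u \<longlonglongrightarrow> d" using assms(1) closure_sequential by blast
  have "(\<lambda>n. inner d (u n)) \<longlonglongrightarrow> inner d d" by (intro tendsto_intros u)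
  moreover have "(\<lambda>n. inner d (u n)) = (\<lambda>n. 0)" using u assms(2) by auto
  ultimately have "inner d d = 0" using LIMSEQ_unique tendsto_const by metis
  then show ?thesis by simp
qed

lemma riesz_sub:
  fixes S :: "'a::{real_inner,complete_space} set" and f :: "'a \<Rightarrow> real"
  assumes sS: "subspace S"
    and fadd: "\<And>x y. x \<in> S \<Longrightarrow> y \<in> S \<Longrightarrow> f (x + y) = f x + f y"
    and fscale: "\<And>c x. x \<in> S \<Longrightarrow> f (c *\<^sub>R x) = c * f x"
    and fbd: "\<And>x. x \<in> S \<Longrightarrow> \<bar>f x\<bar> \<le> K * norm x"
  shows "\<exists>y\<in>closure S. \<forall>g\<in>S. inner y g = f g"
proof (cases "\<forall>g\<in>S. f g = 0")
  case True
  then show ?thesis using sS subspace_0 closure_subset by (intro bexI[of _ 0]) auto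
next
  case False
  then obtain w where wS: "w \<in> S" and fw: "f w \<noteq> 0" by blast
  define w1 where "w1 = (1 / f w) *\<^sub>R w"
  have w1S: "w1 \<in> S" unfolding w1_def using sS wS by (simp add: subspace_scale)
  have fw1: "f w1 = 1" unfolding w1_def using fscale wS fw by simp
  have fsub: "f (x - y) = f x - f y" if "x \<in> S" "y \<in> S" for x y
  proof -
    have my: "(-1) *\<^sub>R y \<in> S" using sS that subspace_scale by blast
    have "f (x - y) = f (x + (-1) *\<^sub>R y)" by simp
    also have "\<dots> = f x + f ((-1) *\<^sub>R y)" by (rule fadd[OF that(1) my])
    also have "f ((-1) *\<^sub>R y) = (-1) * f y" by (rule fscale[OF that(2)])
    finally show ?thesis by simp
  qed
  define Z where "Z = {g\<in>S. f g = 0}"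
  have sZ: "subspace Z" unfolding subspace_def
  proof (intro conjI ballI allI)
    have "f 0 = 0" using fscale[of 0 0] sS subspace_0 by fastforce
    then show "0 \<in> Z" unfolding Z_def using sS subspace_0 by blast
  next
    fix x y assume "x \<in> Z" "y \<in> Z"
    then show "x + y \<in> Z" unfolding Z_def using fadd sS subspace_add by fastforce
  next
    fix c x assume "x \<in> Z"
    then show "c *\<^sub>R x \<in> Z" unfolding Z_def using fscale sS subspace_scale by fastforce
  qed
  have sN: "subspace (closure Z)" by (rule subspace_closure_sub[OF sZ])
  obtain p where pN: "p \<in> closure Z" and porth: "\<forall>m\<in>closure Z. inner (w1 - p) m = 0"
    using proj_exists[OF sN closed_closure] by blast
  define z where "z = w1 - p"
  have ZS: "closure Z \<subseteq> closure S" unfolding Z_def by (intro closure_mono) auto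
  have sCS: "subspace (closure S)" by (rule subspace_closure_sub[OF sS])
  have zS: "z \<in> closure S" unfolding z_def using w1S pN ZS sCS closure_subset
    by (meson in_mono subspace_diff)
  have zp: "inner z p = 0" using porth pN unfolding z_def by blast
  have zw1: "inner z w1 = inner z z"
  proof -
    have "w1 = z + p" unfolding z_def by simp
    then show ?thesis using zp by (simp add: inner_add_right)
  qed
  have z0: "z \<noteq> 0"
  proof
    assume "z = 0"
    hence "w1 \<in> closure Z" using pN unfolding z_def by simp
    then obtain k where k: "\<forall>n. k n \<in> Z" "k \<longlonglongrightarrow> w1" using closure_sequential by blast
    have le: "\<bar>f w1\<bar> \<le> K * norm (w1 - k n)" for n
    proof -
      have "k n \<in> S" "f (k n) = 0" using k unfolding Z_def by auto
      hence "f w1 = f (w1 - k n)" using fsub w1S by simp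
      then show ?thesis using fbd w1S \<open>k n \<in> S\<close> sS by (simp add: subspace_diff)
    qed
    have "(\<lambda>n. K * norm (w1 - k n)) \<longlonglongrightarrow> K * norm (w1 - w1)" by (intro tendsto_intros k)
    hence "\<bar>f w1\<bar> \<le> K * norm (w1 - w1)" using le by (intro LIMSEQ_le_const) auto
    then show False using fw1 by simp
  qed
  define y where "y = (1 / inner z z) *\<^sub>R z"
  show ?thesis
  proof (intro bexI[of _ y] ballI)
    show "y \<in> closure S" unfolding y_def using sCS zS by (simp add: subspace_scale)
  next
    fix g assume gS: "g \<in> S"
    have "g - f g *\<^sub>R w1 \<in> Z" unfolding Z_def using gS w1S sS fsub fscale fw1
      by (simp add: subspace_scale subspace_diff)
    hence "inner z (g - f g *\<^sub>R w1) = 0" using porth closure_subset unfolding z_def by blast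
    hence "inner z g = f g * inner z z" using zw1 by (simp add: inner_diff_right)
    then show "inner y g = f g" unfolding y_def using z0 by simp
  qed
qed



lemma adj_facts:
  fixes S :: "'a::{real_inner,complete_space} set" and A :: "'a \<Rightarrow> 'b::real_inner"
  assumes bl: "bounded_linear_on S A"
  shows "hadjoint S A h \<in> closure S \<and> (\<forall>g\<in>S. inner (hadjoint S A h) g = inner h (A g))"
    and "\<And>y. y \<in> closure S \<Longrightarrow> (\<forall>g\<in>S. inner y g = inner h (A g)) \<Longrightarrow> hadjoint S A h = y"
proof -
  from bl have sS: "subspace S" and Aadd: "\<And>x y. x \<in> S \<Longrightarrow> y \<in> S \<Longrightarrow> A (x + y) = A x + A y"
    and Asc: "\<And>c x. x \<in> S \<Longrightarrow> A (c *\<^sub>R x) = c *\<^sub>R A x"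
    and "\<exists>K. \<forall>x\<in>S. norm (A x) \<le> K * norm x" unfolding bounded_linear_on_def by auto
  then obtain K where K: "\<And>x. x \<in> S \<Longrightarrow> norm (A x) \<le> K * norm x" by blast
  have ex: "\<exists>y\<in>closure S. \<forall>g\<in>S. inner y g = inner h (A g)"
  proof (rule riesz_sub[OF sS, where K = "norm h * K"])
    fix x y assume "x \<in> S" "y \<in> S" then show "inner h (A (x + y)) = inner h (A x) + inner h (A y)"
      using Aadd by (simp add: inner_add_right)
  next
    fix c x assume "x \<in> S" then show "inner h (A (c *\<^sub>R x)) = c * inner h (A x)"
      using Asc by simp
  next
    fix x assume "x \<in> S"
    have "\<bar>inner h (A x)\<bar> \<le> norm h * norm (A x)" by (rule Cauchy_Schwarz_ineq2)
    also have "\<dots> \<le> norm h * (K * norm x)" using K[OF \<open>x \<in> S\<close>] by (simp add: mult_left_mono)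
    finally show "\<bar>inner h (A x)\<bar> \<le> norm h * K * norm x" by simp
  qed
  have uniq: "y1 = y2" if "y1 \<in> closure S" "\<forall>g\<in>S. inner y1 g = inner h (A g)"
     "y2 \<in> closure S" "\<forall>g\<in>S. inner y2 g = inner h (A g)" for y1 y2
  proof -
    have "y1 - y2 \<in> closure S" using that subspace_closure_sub[OF sS] subspace_diff by blast
    moreover have "\<And>g. g \<in> S \<Longrightarrow> inner (y1 - y2) g = 0" using that by (simp add: inner_diff_left)
    ultimately have "y1 - y2 = 0" by (rule orth_closure_zero)
    then show ?thesis by simp
  qed
  have ex1: "\<exists>!y. y \<in> closure S \<and> (\<forall>g\<in>S. inner y g = inner h (A g))"
    using ex uniq by blast
  show "hadjoint S A h \<in> closure S \<and> (\<forall>g\<in>S. inner (hadjoint S A h) g = inner h (A g))"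
    unfolding hadjoint_def by (rule theI'[OF ex1])
  show "\<And>y. y \<in> closure S \<Longrightarrow> (\<forall>g\<in>S. inner y g = inner h (A g)) \<Longrightarrow> hadjoint S A h = y"
    unfolding hadjoint_def using ex1 by (intro the1_equality) auto
qed

lemma adj_bounded_linear:
  fixes S :: "'a::{real_inner,complete_space} set" and A :: "'a \<Rightarrow> 'b::real_inner"
  assumes bl: "bounded_linear_on S A"
  shows "bounded_linear (hadjoint S A)"
proof -
  from bl have sS: "subspace S" and "\<exists>K. \<forall>x\<in>S. norm (A x) \<le> K * norm x"
    and Aadd: "\<And>x y. x \<in> S \<Longrightarrow> y \<in> S \<Longrightarrow> A (x + y) = A x + A y"
    and Asc: "\<And>c x. x \<in> S \<Longrightarrow> A (c *\<^sub>R x) = c *\<^sub>R A x"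
    unfolding bounded_linear_on_def by auto
  then obtain K where K: "\<And>x. x \<in> S \<Longrightarrow> norm (A x) \<le> K * norm x" by blast
  have sCS: "subspace (closure S)" by (rule subspace_closure_sub[OF sS])
  let ?T = "hadjoint S A"
  note F1 = adj_facts(1)[OF bl] and F2 = adj_facts(2)[OF bl]
  show ?thesis
  proof (rule bounded_linear_intro[where K = "max K 0"])
    fix x y
    show "?T (x + y) = ?T x + ?T y"
    proof (rule F2)
      show "?T x + ?T y \<in> closure S" using F1[of x] F1[of y] sCS subspace_add by blast
      show "\<forall>g\<in>S. inner (?T x + ?T y) g = inner (x + y) (A g)"
        using F1[of x] F1[of y] by (simp add: inner_add_left)
    qed
  next
    fix r x
    show "?T (r *\<^sub>R x) = r *\<^sub>R ?T x"
    proof (rule F2)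
      show "r *\<^sub>R ?T x \<in> closure S" using F1[of x] sCS subspace_scale by blast
      show "\<forall>g\<in>S. inner (r *\<^sub>R ?T x) g = inner (r *\<^sub>R x) (A g)"
        using F1[of x] by simp
    qed
  next
    fix x
    obtain u where u: "\<forall>n. u n \<in> S" "u \<longlonglongrightarrow> ?T x" using F1[of x] closure_sequential by blast
    have le: "inner (?T x) (u n) \<le> norm x * K * norm (u n)" for n
    proof -
      have "inner (?T x) (u n) = inner x (A (u n))" using F1[of x] u by auto
      also have "\<dots> \<le> norm x * norm (A (u n))" using Cauchy_Schwarz_ineq2 abs_le_D1 by blast
      also have "\<dots> \<le> norm x * (K * norm (u n))" using K u by (simp add: mult_left_mono)
      finally show ?thesis by simp
    qed
    have l1: "(\<lambda>n. inner (?T x) (u n)) \<longlonglongrightarrow> inner (?T x) (?T x)" by (intro tendsto_intros u)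
    have l2: "(\<lambda>n. norm x * K * norm (u n)) \<longlonglongrightarrow> norm x * K * norm (?T x)" by (intro tendsto_intros u)
    have "inner (?T x) (?T x) \<le> norm x * K * norm (?T x)"
      by (rule LIMSEQ_le[OF l1 l2]) (use le in auto)
    hence sq: "norm (?T x) * norm (?T x) \<le> (norm x * K) * norm (?T x)"
      by (simp add: power2_norm_eq_inner[symmetric] power2_eq_square)
    show "norm (?T x) \<le> norm x * max K 0"
    proof (cases "norm (?T x) = 0")
      case True then show ?thesis by simp
    next
      case False
      hence "norm (?T x) \<le> norm x * K" using sq
        by (metis mult_right_le_imp_le norm_ge_zero order_le_less)
      also have "\<dots> \<le> norm x * max K 0" by (simp add: mult_left_mono)
      finally show ?thesis .
    qed
  qed
qed



theorem proposition2p11: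
  fixes Theta :: "'a::{real_inner, complete_space} set"
    and A :: "'a \<Rightarrow> 'b::{real_inner, complete_space}"
    and G :: "'b set"
    and chi :: 'a
  assumes A_cont: "bounded_linear_on (span Theta) A"
    and inj_adj: "inj (hadjoint (span Theta) A)"
    and G_sub: "subspace G"
    and G_dense: "closure G = UNIV"
    and chi_in: "chi \<in> closure (span Theta)"
  shows "(chi \<in> range (hadjoint (span Theta) A) \<longleftrightarrow>
            (\<exists>chis :: nat \<Rightarrow> 'a. \<exists>psi :: 'b.
               (\<forall>n. chis n \<in> hadjoint (span Theta) A ` G) \<and> chis \<longlonglongrightarrow> chi \<and>
               (\<lambda>n. inv (hadjoint (span Theta) A) (chis n)) \<longlonglongrightarrow> psi))
       \<and> (\<forall>chis :: nat \<Rightarrow> 'a. \<forall>psi :: 'b.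
               (\<forall>n. chis n \<in> hadjoint (span Theta) A ` G) \<and> chis \<longlonglongrightarrow> chi \<and>
               (\<lambda>n. inv (hadjoint (span Theta) A) (chis n)) \<longlonglongrightarrow> psi
             \<longrightarrow> hadjoint (span Theta) A psi = chi
               \<and> orth_proj (closure (A ` span Theta)) psi = psi
               \<and> psi = mp_pinv (hadjoint (span Theta) A) chi)"
proof -
  define S where "S = span Theta"
  define T where "T = hadjoint S A"
  have bl: "bounded_linear_on S A" using A_cont unfolding S_def .
  have inj: "inj T" using inj_adj unfolding T_def S_def .
  have blT: "bounded_linear T" unfolding T_def by (rule adj_bounded_linear[OF bl])
  have T0: "T 0 = 0" using blT by (simp add: linear_simps)
  have Tker: "T h = 0 \<longleftrightarrow> h = 0" for h using inj T0 by (metis injD)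
  have TA: "\<forall>g\<in>S. inner (T h) g = inner h (A g)" for h
    using adj_facts(1)[OF bl] unfolding T_def by blast
  have key: "T psi = chi" if H: "(\<forall>n. chis n \<in> T ` G) \<and> chis \<longlonglongrightarrow> chi \<and>
               (\<lambda>n. inv T (chis n)) \<longlonglongrightarrow> psi" for chis psi
  proof -
    have "\<forall>n. \<exists>g\<in>G. chis n = T g" using H by blast
    then obtain g where g: "\<And>n. chis n = T (g n)" by metis
    have "(\<lambda>n. inv T (chis n)) = g" using g inj by (simp add: inv_f_f)
    hence "g \<longlonglongrightarrow> psi" using H by simp
    hence "(\<lambda>n. T (g n)) \<longlonglongrightarrow> T psi" by (rule bounded_linear.tendsto[OF blT])
    moreover have "(\<lambda>n. T (g n)) = chis" using g by (simp add: fun_eq_iff)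
    hence "(\<lambda>n. T (g n)) \<longlonglongrightarrow> chi" using H by simp
    ultimately show ?thesis using LIMSEQ_unique by blast
  qed
  have part1: "chi \<in> range T \<longleftrightarrow> (\<exists>chis :: nat \<Rightarrow> 'a. \<exists>psi :: 'b.
               (\<forall>n. chis n \<in> T ` G) \<and> chis \<longlonglongrightarrow> chi \<and>
               (\<lambda>n. inv T (chis n)) \<longlonglongrightarrow> psi)"
  proof
    assume "chi \<in> range T"
    then obtain psi0 where p0: "chi = T psi0" by blast
    have "psi0 \<in> closure G" using G_dense by simp
    then obtain g where g: "\<forall>n. g n \<in> G" "g \<longlonglongrightarrow> psi0" using closure_sequential by blast
    have "(\<lambda>n. T (g n)) \<longlonglongrightarrow> chi" unfolding p0 by (rule bounded_linear.tendsto[OF blT g(2)])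
    moreover have "(\<lambda>n. inv T (T (g n))) = g" using inj by (simp add: inv_f_f)
    ultimately show "\<exists>chis :: nat \<Rightarrow> 'a. \<exists>psi :: 'b.
               (\<forall>n. chis n \<in> T ` G) \<and> chis \<longlonglongrightarrow> chi \<and>
               (\<lambda>n. inv T (chis n)) \<longlonglongrightarrow> psi"
      using g by (intro exI[of _ "\<lambda>n. T (g n)"] exI[of _ psi0]) auto
  next
    assume "\<exists>chis :: nat \<Rightarrow> 'a. \<exists>psi :: 'b.
               (\<forall>n. chis n \<in> T ` G) \<and> chis \<longlonglongrightarrow> chi \<and>
               (\<lambda>n. inv T (chis n)) \<longlonglongrightarrow> psi"
    then show "chi \<in> range T" using key by blast
  qed
  have part2: "T psi = chi \<and> orth_proj (closure (A ` S)) psi = psi \<and> psi = mp_pinv T chi"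
    if H: "(\<forall>n. chis n \<in> T ` G) \<and> chis \<longlonglongrightarrow> chi \<and>
               (\<lambda>n. inv T (chis n)) \<longlonglongrightarrow> psi" for chis psi
  proof -
    have Tpsi: "T psi = chi" by (rule key[OF H])
    from bl have sS: "subspace S" and Aadd: "\<And>x y. x \<in> S \<Longrightarrow> y \<in> S \<Longrightarrow> A (x + y) = A x + A y"
      and Asc: "\<And>c x. x \<in> S \<Longrightarrow> A (c *\<^sub>R x) = c *\<^sub>R A x"
      unfolding bounded_linear_on_def by auto
    have sAS: "subspace (A ` S)" unfolding subspace_def
    proof (intro conjI ballI allI)
      have "A 0 = A (0 *\<^sub>R 0)" by simp
      also have "\<dots> = 0" using Asc sS subspace_0 by (metis scale_zero_left)
      finally show "0 \<in> A ` S" using sS subspace_0 by (metis image_eqI)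
    next
      fix x y assume "x \<in> A ` S" "y \<in> A ` S"
      then obtain a b where "a \<in> S" "b \<in> S" "x = A a" "y = A b" by blast
      then show "x + y \<in> A ` S" using Aadd sS subspace_add by (metis image_eqI)
    next
      fix c x assume "x \<in> A ` S"
      then obtain a where "a \<in> S" "x = A a" by blast
      then show "c *\<^sub>R x \<in> A ` S" using Asc sS subspace_scale by (metis image_eqI)
    qed
    define R where "R = closure (A ` S)"
    have sR: "subspace R" unfolding R_def by (rule subspace_closure_sub[OF sAS])
    have cR: "closed R" unfolding R_def by simp
    obtain p where pR: "p \<in> R" and po: "\<forall>m\<in>R. inner (psi - p) m = 0"
      using proj_exists[OF sR cR] by blast
    have "T (psi - p) = 0"
    proof -
      have "\<forall>g\<in>S. inner (0::'a) g = inner (psi - p) (A g)"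
        using po closure_subset[of "A ` S"] unfolding R_def by (simp add: subset_iff)
      moreover have "(0::'a) \<in> closure S" using sS subspace_0 closure_subset by blast
      ultimately show ?thesis using adj_facts(2)[OF bl] unfolding T_def by blast
    qed
    hence "psi = p" using Tker by simp
    hence psiR: "psi \<in> R" using pR by simp
    have op: "orth_proj R psi = psi" unfolding orth_proj_def
    proof (rule the_equality)
      show "psi \<in> R \<and> (\<forall>m\<in>R. inner (psi - psi) m = 0)" using psiR by simp
    next
      fix y assume y: "y \<in> R \<and> (\<forall>m\<in>R. inner (psi - y) m = 0)"
      hence "psi - y \<in> R" using psiR sR subspace_diff by blast
      hence "inner (psi - y) (psi - y) = 0" using y by blast
      then show "y = psi" by simp
    qed
    have ker: "T -` {0} = {0}" using Tker by auto
    have oc: "orthogonal_comp {0::'b} = UNIV" by (auto simp: orthogonal_comp_def orthogonal_def)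
    have mp: "mp_pinv T chi = psi" unfolding mp_pinv_def ker oc
    proof (rule the_equality)
      show "psi \<in> UNIV \<and> T psi = chi" using Tpsi by simp
    next
      fix x assume "x \<in> UNIV \<and> T x = chi"
      then show "x = psi" using Tpsi inj by (metis injD)
    qed
    show ?thesis using Tpsi op mp unfolding R_def by simp
  qed
  show ?thesis using part1 part2 unfolding T_def S_def by blast
qed


end
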